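(* Let $\mathbf{F}_\Phi$ be a two-sided Scissorhand fence over the Cantor space $X$, let $H_X:X\to X$ be a continuous surjection, and let $T:\mathbf{F}_\Phi\to\mathbf{F}_\Phi$ be a continuous lifting of $H_X$. Then: (1) if $H_X$ is transitive, then $T$ is transitive; (2) if $H_X$ is minimal, then $T$ is minimal; (3) if $T$ is a homeomorphism and $H_X$ is chaotic, then $T$ is chaotic.
   Context: For $\Phi=(\varphi^L,\varphi^U)$ with $\varphi^L,\varphi^U:X\to[0,1]$, $\varphi^L$ lower semicontinuous, $\varphi^U$ upper semicontinuous, $\varphi^L\le\varphi^U$, the fence is $\mathbf{F}_\Phi=\{(x,t)\in X\times[0,1]:\varphi^L(x)\le t\le\varphi^U(x)\}$ and $\mathbf{F}_\Phi(x)=\{t:(x,t)\in\mathbf{F}_\Phi\}$. It is a two-sided Scissorhand fence if both graphs $\{(x,\varphi^U(x))\}$ and $\{(x,\varphi^L(x))\}$ are dense in $\mathbf{F}_\Phi$ and $\{x:\varphi^L(x)\ne\varphi^U(x)\}$ is dense in $X$. A map $T$ is a lifting of $H_X$ if $T(x,t)=(H_X(x),s)$ with $s\in\mathbf{F}_\Phi(H_X(x))$ for all $(x,t)\in\mathbf{F}_\Phi$. Transitive: there is a point with dense orbit; minimal: every orbit is dense; chaotic (Devaney): transitive with a dense set of periodic points. *)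

theory Defs
  imports "HOL-Analysis.Analysis"
begin

definition cantor_top :: "(nat \<Rightarrow> bool) topology" where
  "cantor_top = product_topology (\<lambda>_. discrete_topology (UNIV :: bool set)) UNIV"

definition lsc_on :: "'a topology \<Rightarrow> ('a \<Rightarrow> real) \<Rightarrow> bool" where
  "lsc_on Top f \<longleftrightarrow> (\<forall>a. openin Top {x \<in> topspace Top. a < f x})"

definition usc_on :: "'a topology \<Rightarrow> ('a \<Rightarrow> real) \<Rightarrow> bool" where
  "usc_on Top f \<longleftrightarrow> (\<forall>a. openin Top {x \<in> topspace Top. f x < a})"

definition fence_pair :: "((nat \<Rightarrow> bool) \<Rightarrow> real) \<Rightarrow> ((nat \<Rightarrow> bool) \<Rightarrow> real) \<Rightarrow> bool" where
  "fence_pair phiL phiU \<longleftrightarrow>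
     (\<forall>x. 0 \<le> phiL x \<and> phiL x \<le> phiU x \<and> phiU x \<le> 1) \<and>
     lsc_on cantor_top phiL \<and> usc_on cantor_top phiU"

definition fence :: "((nat \<Rightarrow> bool) \<Rightarrow> real) \<Rightarrow> ((nat \<Rightarrow> bool) \<Rightarrow> real) \<Rightarrow> ((nat \<Rightarrow> bool) \<times> real) set" where
  "fence phiL phiU = {(x, t). t \<in> {0..1} \<and> phiL x \<le> t \<and> t \<le> phiU x}"

definition fence_fiber :: "((nat \<Rightarrow> bool) \<Rightarrow> real) \<Rightarrow> ((nat \<Rightarrow> bool) \<Rightarrow> real) \<Rightarrow> (nat \<Rightarrow> bool) \<Rightarrow> real set" where
  "fence_fiber phiL phiU x = {t. (x, t) \<in> fence phiL phiU}"

definition fence_top :: "((nat \<Rightarrow> bool) \<Rightarrow> real) \<Rightarrow> ((nat \<Rightarrow> bool) \<Rightarrow> real) \<Rightarrow> ((nat \<Rightarrow> bool) \<times> real) topology" where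
  "fence_top phiL phiU = subtopology (prod_topology cantor_top euclideanreal) (fence phiL phiU)"

definition two_sided_scissorhand :: "((nat \<Rightarrow> bool) \<Rightarrow> real) \<Rightarrow> ((nat \<Rightarrow> bool) \<Rightarrow> real) \<Rightarrow> bool" where
  "two_sided_scissorhand phiL phiU \<longleftrightarrow>
     fence_pair phiL phiU \<and>
     fence_top phiL phiU closure_of {(x, phiU x) | x. True} = fence phiL phiU \<and>
     fence_top phiL phiU closure_of {(x, phiL x) | x. True} = fence phiL phiU \<and>
     cantor_top closure_of {x. phiL x \<noteq> phiU x} = topspace cantor_top"

definition is_lifting ::
  "((nat \<Rightarrow> bool) \<Rightarrow> real) \<Rightarrow> ((nat \<Rightarrow> bool) \<Rightarrow> real) \<Rightarrow> ((nat \<Rightarrow> bool) \<Rightarrow> (nat \<Rightarrow> bool))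
    \<Rightarrow> ((nat \<Rightarrow> bool) \<times> real \<Rightarrow> (nat \<Rightarrow> bool) \<times> real) \<Rightarrow> bool" where
  "is_lifting phiL phiU H T \<longleftrightarrow>
     (\<forall>x t. (x, t) \<in> fence phiL phiU \<longrightarrow>
        (\<exists>s. s \<in> fence_fiber phiL phiU (H x) \<and> T (x, t) = (H x, s)))"

definition orbit :: "('a \<Rightarrow> 'a) \<Rightarrow> 'a \<Rightarrow> 'a set" where
  "orbit f p = {(f ^^ n) p | n. True}"

definition transitive_on :: "'a topology \<Rightarrow> ('a \<Rightarrow> 'a) \<Rightarrow> bool" where
  "transitive_on Top f \<longleftrightarrow> (\<exists>p \<in> topspace Top. Top closure_of orbit f p = topspace Top)"

definition minimal_on :: "'a topology \<Rightarrow> ('a \<Rightarrow> 'a) \<Rightarrow> bool" where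
  "minimal_on Top f \<longleftrightarrow> (\<forall>p \<in> topspace Top. Top closure_of orbit f p = topspace Top)"

definition periodic_points :: "'a topology \<Rightarrow> ('a \<Rightarrow> 'a) \<Rightarrow> 'a set" where
  "periodic_points Top f = {p \<in> topspace Top. \<exists>n>0. (f ^^ n) p = p}"

definition chaotic_on :: "'a topology \<Rightarrow> ('a \<Rightarrow> 'a) \<Rightarrow> bool" where
  "chaotic_on Top f \<longleftrightarrow> transitive_on Top f \<and>
     Top closure_of periodic_points Top f = topspace Top"

end

theory Submission
  imports Defs
begin

lemma topspace_cantor [simp]: "topspace cantor_top = UNIV"
  by (simp add: cantor_top_def)

lemma topspace_fence_top [simp]: "topspace (fence_top phiL phiU) = fence phiL phiU"
  by (simp add: fence_top_def)

lemma open_sets: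
  assumes "fence_pair phiL phiU"
  shows "openin cantor_top {x. phiU x < a}" "openin cantor_top {x. a < phiL x}"
  using assms unfolding fence_pair_def lsc_on_def usc_on_def by auto

lemma fence_open:
  assumes "openin cantor_top C" "a < b"
  shows "openin (fence_top phiL phiU) ((C \<times> {a<..<b}) \<inter> fence phiL phiU)"
  unfolding fence_top_def openin_subtopology
  using assms by (intro exI[of _ "C \<times> {a<..<b}"]) (auto simp: openin_prod_Times_iff)

lemma closure_meet:
  assumes "x \<in> X closure_of S" "x \<in> T" "openin X T" shows "\<exists>y. y \<in> S \<and> y \<in> T"
  using assms unfolding in_closure_of by blast

lemma key:
  assumes S: "two_sided_scissorhand phiL phiU"
    and U: "openin (fence_top phiL phiU) U" and p: "(x0, t0) \<in> U"
  shows "\<exists>N. openin cantor_top N \<and> N \<noteq> {} \<and>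
           (\<forall>x\<in>N. \<forall>t. (x,t) \<in> fence phiL phiU \<longrightarrow> (x,t) \<in> U)"
proof -
  have fp: "fence_pair phiL phiU"
    and dU: "fence_top phiL phiU closure_of {(x, phiU x) | x. True} = fence phiL phiU"
    and dL: "fence_top phiL phiU closure_of {(x, phiL x) | x. True} = fence phiL phiU"
    using S unfolding two_sided_scissorhand_def by auto
  obtain W where W: "openin (prod_topology cantor_top euclideanreal) W" "U = W \<inter> fence phiL phiU"
    using U unfolding fence_top_def openin_subtopology by auto
  have f0: "(x0,t0) \<in> fence phiL phiU" "(x0,t0) \<in> W" using p W by auto
  obtain C V where CV: "openin cantor_top C" "openin euclideanreal V" "x0 \<in> C" "t0 \<in> V" "C \<times> V \<subseteq> W"
    using W(1) f0(2) unfolding openin_prod_topology_alt by meson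
  obtain e where e: "e > 0" "ball t0 e \<subseteq> V"
  proof -
    have "open V" using CV(2) by simp
    then show ?thesis using CV(4) that open_contains_ball_eq[of V t0] by blast
  qed
  have "(x0,t0) \<in> fence_top phiL phiU closure_of {(x, phiU x) | x. True}"
    using dU f0 by simp
  moreover have "(x0,t0) \<in> (C \<times> {t0 - e/3<..<t0 + e/3}) \<inter> fence phiL phiU"
    using f0 CV e by auto
  moreover have "openin (fence_top phiL phiU) ((C \<times> {t0 - e/3<..<t0 + e/3}) \<inter> fence phiL phiU)"
    using fence_open CV e by simp
  ultimately have "\<exists>w. w \<in> {(x, phiU x) | x. True} \<and> w \<in> (C \<times> {t0 - e/3<..<t0 + e/3}) \<inter> fence phiL phiU" by (rule closure_meet)
  then obtain y where y: "y \<in> C" "t0 - e/3 < phiU y" "phiU y < t0 + e/3" "(y, phiU y) \<in> fence phiL phiU"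
    by auto
  define N1 where "N1 = C \<inter> {x. phiU x < phiU y + e/3}"
  have N1: "openin cantor_top N1" "y \<in> N1"
    unfolding N1_def using open_sets(1)[OF fp] CV(1) y e by (auto intro: openin_Int)
  have "(y, phiU y) \<in> fence_top phiL phiU closure_of {(x, phiL x) | x. True}"
    using dL y by simp
  moreover have "(y, phiU y) \<in> (N1 \<times> {phiU y - e/3<..<phiU y + e/3}) \<inter> fence phiL phiU"
    using y N1 e by auto
  moreover have "openin (fence_top phiL phiU) ((N1 \<times> {phiU y - e/3<..<phiU y + e/3}) \<inter> fence phiL phiU)"
    using fence_open N1 e by simp
  ultimately have "\<exists>w. w \<in> {(x, phiL x) | x. True} \<and> w \<in> (N1 \<times> {phiU y - e/3<..<phiU y + e/3}) \<inter> fence phiL phiU" by (rule closure_meet)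
  then obtain z where z: "z \<in> N1" "phiU y - e/3 < phiL z" "phiL z < phiU y + e/3"
    by auto
  define N where "N = C \<inter> {x. phiU x < t0 + e} \<inter> {x. t0 - e < phiL x}"
  have "openin cantor_top N"
    unfolding N_def using open_sets[OF fp] CV by (intro openin_Int) auto
  moreover have "z \<in> N" using z y unfolding N_def N1_def by auto
  moreover have "\<forall>x\<in>N. \<forall>t. (x,t) \<in> fence phiL phiU \<longrightarrow> (x,t) \<in> U"
  proof (intro ballI allI impI)
    fix x t assume x: "x \<in> N" and xt: "(x,t) \<in> fence phiL phiU"
    then have "t \<in> ball t0 e" unfolding N_def fence_def by (auto simp: dist_real_def)
    then have "(x,t) \<in> W" using e CV x unfolding N_def by auto
    then show "(x,t) \<in> U" using W xt by auto
  qed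
  ultimately show ?thesis by blast
qed


lemma iter_lift:
  assumes L: "is_lifting phiL phiU H T" and xt: "(x,t) \<in> fence phiL phiU"
  shows "(T^^n) (x,t) \<in> fence phiL phiU \<and> fst ((T^^n) (x,t)) = (H^^n) x"
proof (induction n)
  case 0 then show ?case using xt by simp
next
  case (Suc n)
  obtain y u where yu: "(T^^n) (x,t) = (y,u)" by fastforce
  with Suc have y: "(y,u) \<in> fence phiL phiU" "y = (H^^n) x" by auto
  obtain s where s: "s \<in> fence_fiber phiL phiU (H y)" "T (y,u) = (H y, s)"
    using L y(1) unfolding is_lifting_def by blast
  show ?case using s y yu by (simp add: fence_fiber_def)
qed

lemma fence_nonempty:
  assumes "fence_pair phiL phiU" shows "(x, phiL x) \<in> fence phiL phiU"
proof -
  have "0 \<le> phiL x" "phiL x \<le> phiU x" "phiU x \<le> 1" using assms unfolding fence_pair_def by auto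
  then show ?thesis unfolding fence_def by auto
qed

lemma dense_by_open:
  assumes "\<And>U w. openin X U \<Longrightarrow> w \<in> U \<Longrightarrow> \<exists>y. y \<in> S \<and> y \<in> U"
  shows "X closure_of S = topspace X"
proof
  show "X closure_of S \<subseteq> topspace X" by (rule closure_of_subset_topspace)
  show "topspace X \<subseteq> X closure_of S"
    unfolding in_closure_of subset_iff using assms by blast
qed

lemma dense_orbit:
  assumes S: "two_sided_scissorhand phiL phiU" and L: "is_lifting phiL phiU H T"
    and p: "cantor_top closure_of orbit H p = topspace cantor_top"
    and pt: "(p,t) \<in> fence phiL phiU"
  shows "fence_top phiL phiU closure_of orbit T (p,t) = topspace (fence_top phiL phiU)"
proof (rule dense_by_open)
  fix U w assume U: "openin (fence_top phiL phiU) U" "w \<in> U"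
  have w: "(fst w, snd w) \<in> U" using U(2) by simp
  obtain N where N: "openin cantor_top N" "N \<noteq> {}"
      "\<forall>x\<in>N. \<forall>t. (x,t) \<in> fence phiL phiU \<longrightarrow> (x,t) \<in> U"
    using key[OF S U(1) w] by blast
  obtain x where x: "x \<in> N" using N(2) by blast
  have "x \<in> cantor_top closure_of orbit H p" using p by simp
  then obtain z where "z \<in> orbit H p" "z \<in> N" using closure_meet[OF _ x N(1)] by blast
  then obtain n where n: "(H^^n) p \<in> N" unfolding orbit_def by blast
  have "(T^^n) (p,t) \<in> fence phiL phiU" "fst ((T^^n) (p,t)) = (H^^n) p"
    using iter_lift[OF L pt] by auto
  then have "(T^^n) (p,t) \<in> U" using N(3) n by (metis prod.collapse)
  moreover have "(T^^n) (p,t) \<in> orbit T (p,t)" unfolding orbit_def by blast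
  ultimately show "\<exists>y. y \<in> orbit T (p,t) \<and> y \<in> U" by blast
qed

lemma cont_iter:
  assumes "continuous_map X X f" shows "continuous_map X X (f^^n)"
proof (induction n)
  case 0 then show ?case by (simp add: id_def[symmetric])
next
  case (Suc n) then show ?case unfolding funpow.simps(2) by (rule continuous_map_compose[OF _ assms])
qed

lemma fixed_point:
  assumes fp: "fence_pair phiL phiU" and L: "is_lifting phiL phiU H T"
    and C: "continuous_map (fence_top phiL phiU) (fence_top phiL phiU) T"
    and q: "(H^^k) q = q"
  shows "\<exists>s. (q,s) \<in> fence phiL phiU \<and> (T^^k) (q,s) = (q,s)"
proof -
  define a where "a = phiL q"
  define b where "b = phiU q"
  have ab: "a \<le> b" "0 \<le> a" "b \<le> 1" using fp unfolding fence_pair_def a_def b_def by auto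
  have inF: "(q,s) \<in> fence phiL phiU" if "s \<in> {a..b}" for s
    using that ab unfolding fence_def a_def b_def by auto
  have emb: "continuous_map (top_of_set {a..b}) (fence_top phiL phiU) (\<lambda>s. (q,s))"
    unfolding fence_top_def continuous_map_in_subtopology continuous_map_pairwise
    using inF by (auto simp: o_def continuous_on_id)
  have F: "continuous_map (fence_top phiL phiU) (fence_top phiL phiU) (T^^k)"
    using cont_iter[OF C] .
  have sn: "continuous_map (fence_top phiL phiU) euclideanreal snd"
    unfolding fence_top_def by (rule continuous_map_from_subtopology[OF continuous_map_snd])
  define g where "g = (\<lambda>s. snd ((T^^k) (q,s)))"
  have "continuous_map (top_of_set {a..b}) euclideanreal g"
    using continuous_map_compose[OF continuous_map_compose[OF emb F] sn] unfolding g_def o_def .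
  then have cg: "continuous_on {a..b} g" by simp
  have it: "(T^^k) (q,s) = (q, g s) \<and> g s \<in> {a..b}" if "s \<in> {a..b}" for s
  proof -
    have "(T^^k) (q,s) \<in> fence phiL phiU" "fst ((T^^k) (q,s)) = q"
      using iter_lift[OF L inF[OF that]] q by auto
    then show ?thesis unfolding g_def fence_def a_def b_def by (cases "(T^^k) (q,s)") auto
  qed
  have "continuous_on {a..b} (\<lambda>s. g s - s)" using cg by (intro continuous_intros)
  moreover have "g b - b \<le> 0" "0 \<le> g a - a" using it[of a] it[of b] ab by auto
  ultimately obtain s where s: "a \<le> s" "s \<le> b" "g s - s = 0"
    using IVT2'[of "\<lambda>s. g s - s" b 0 a] ab by auto
  then show ?thesis using it[of s] inF[of s] by auto
qed

theorem theorem3p3: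
  fixes phiL phiU :: "(nat \<Rightarrow> bool) \<Rightarrow> real"
    and H :: "(nat \<Rightarrow> bool) \<Rightarrow> (nat \<Rightarrow> bool)"
    and T :: "(nat \<Rightarrow> bool) \<times> real \<Rightarrow> (nat \<Rightarrow> bool) \<times> real"
  assumes "two_sided_scissorhand phiL phiU"
    and "continuous_map cantor_top cantor_top H"
    and "H ` topspace cantor_top = topspace cantor_top"
    and "continuous_map (fence_top phiL phiU) (fence_top phiL phiU) T"
    and "is_lifting phiL phiU H T"
  shows "(transitive_on cantor_top H \<longrightarrow> transitive_on (fence_top phiL phiU) T) \<and>
         (minimal_on cantor_top H \<longrightarrow> minimal_on (fence_top phiL phiU) T) \<and>
         (homeomorphic_map (fence_top phiL phiU) (fence_top phiL phiU) T \<and> chaotic_on cantor_top H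
            \<longrightarrow> chaotic_on (fence_top phiL phiU) T)"
proof -
  note S = assms(1) and L = assms(5) and C = assms(4)
  have fp: "fence_pair phiL phiU" using S unfolding two_sided_scissorhand_def by auto
  have tr: "transitive_on (fence_top phiL phiU) T" if tH: "transitive_on cantor_top H"
  proof -
    obtain p where p: "cantor_top closure_of orbit H p = topspace cantor_top"
      using tH unfolding transitive_on_def by blast
    show ?thesis unfolding transitive_on_def
      using dense_orbit[OF S L p fence_nonempty[OF fp]] fence_nonempty[OF fp, of p] by auto
  qed
  have mi: "minimal_on (fence_top phiL phiU) T" if "minimal_on cantor_top H"
    unfolding minimal_on_def
  proof
    fix w assume "w \<in> topspace (fence_top phiL phiU)"
    then obtain p t where w: "w = (p,t)" "(p,t) \<in> fence phiL phiU" by (cases w) auto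
    have "cantor_top closure_of orbit H p = topspace cantor_top"
      using that unfolding minimal_on_def by auto
    then show "fence_top phiL phiU closure_of orbit T w = topspace (fence_top phiL phiU)"
      using dense_orbit[OF S L _ w(2)] w(1) by simp
  qed
  have ch: "chaotic_on (fence_top phiL phiU) T" if "chaotic_on cantor_top H"
    unfolding chaotic_on_def
  proof
    show "transitive_on (fence_top phiL phiU) T" using tr that unfolding chaotic_on_def by auto
    have P: "cantor_top closure_of periodic_points cantor_top H = topspace cantor_top"
      using that unfolding chaotic_on_def by auto
    show "fence_top phiL phiU closure_of periodic_points (fence_top phiL phiU) T = topspace (fence_top phiL phiU)"
    proof (rule dense_by_open)
      fix U w assume U: "openin (fence_top phiL phiU) U" "w \<in> U"
      have w: "(fst w, snd w) \<in> U" using U(2) by simp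
      obtain N where N: "openin cantor_top N" "N \<noteq> {}"
          "\<forall>x\<in>N. \<forall>t. (x,t) \<in> fence phiL phiU \<longrightarrow> (x,t) \<in> U"
        using key[OF S U(1) w] by blast
      obtain x where x: "x \<in> N" using N(2) by blast
      have "x \<in> cantor_top closure_of periodic_points cantor_top H" using P by simp
      then obtain q where "q \<in> periodic_points cantor_top H" "q \<in> N" using closure_meet[OF _ x N(1)] by blast
      then obtain k where k: "k > 0" "(H^^k) q = q" "q \<in> N" unfolding periodic_points_def by blast
      obtain s where s: "(q,s) \<in> fence phiL phiU" "(T^^k) (q,s) = (q,s)"
        using fixed_point[OF fp L C k(2)] by blast
      have "(q,s) \<in> periodic_points (fence_top phiL phiU) T"
        unfolding periodic_points_def using s k by auto
      moreover have "(q,s) \<in> U" using N(3) k(3) s(1) by blast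
      ultimately show "\<exists>y. y \<in> periodic_points (fence_top phiL phiU) T \<and> y \<in> U" by blast
    qed
  qed
  show ?thesis using tr mi ch by blast
qed

end
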